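(* If $n\ge 8$ and $S=\{x_1,\dots,x_n\}$ is an $(n-7)$-fold GCD closed set of distinct positive integers, then the LCM matrix $[S]$ is nonsingular.
   Context: Let $T$ be a set of $n$ distinct positive integers and $r\in[1,n-1]$ an integer. $T$ is $r$-fold GCD closed if there is a divisor chain $R\subseteq T$ (a set totally ordered by divisibility) with $|R|=r$ such that $\max(R)$ divides $\min(T\setminus R)$ and $T\setminus R$ is GCD closed (i.e. $\gcd(x,y)\in T\setminus R$ for all $x,y\in T\setminus R$). The LCM matrix $[S]$ has $(i,j)$ entry $\mathrm{lcm}(x_i,x_j)$. *)

theory Defs
  imports Main "Jordan_Normal_Form.Determinant"
begin

definition gcd_closed :: "nat set \<Rightarrow> bool" where
  "gcd_closed A \<longleftrightarrow> (\<forall>x\<in>A. \<forall>y\<in>A. gcd x y \<in> A)"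

definition divisor_chain :: "nat set \<Rightarrow> bool" where
  "divisor_chain R \<longleftrightarrow> (\<forall>x\<in>R. \<forall>y\<in>R. x dvd y \<or> y dvd x)"

definition r_fold_gcd_closed :: "nat \<Rightarrow> nat set \<Rightarrow> bool" where
  "r_fold_gcd_closed r T \<longleftrightarrow>
     1 \<le> r \<and> r \<le> card T - 1 \<and>
     (\<exists>R. R \<subseteq> T \<and> divisor_chain R \<and> card R = r \<and>
          Max R dvd Min (T - R) \<and> gcd_closed (T - R))"

definition lcm_matrix :: "nat list \<Rightarrow> int mat" where
  "lcm_matrix xs = mat (length xs) (length xs) (\<lambda>(i, j). int (lcm (xs ! i) (xs ! j)))"

end

theory Submission
  imports Defs
begin

function gg :: "nat \<Rightarrow> rat" where
  "gg d = (if d = 0 then 0 else 1 / of_nat d - (\<Sum>e\<in>{e. e dvd d \<and> e < d}. gg e))"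
  by auto
termination by (relation "measure id") auto
declare gg.simps[simp del]

lemma gg_sum: assumes "d > 0" shows "(\<Sum>e\<in>{e. e dvd d}. gg e) = 1 / of_nat d"
proof -
  have fin: "finite {e. e dvd d \<and> e < d}" by auto
  have "{e. e dvd d} = insert d {e. e dvd d \<and> e < d}"
    using assms by (auto dest: dvd_imp_le)
  then have "(\<Sum>e\<in>{e. e dvd d}. gg e) = gg d + (\<Sum>e\<in>{e. e dvd d \<and> e < d}. gg e)"
    using fin by simp
  also have "\<dots> = 1 / of_nat d" using assms by (subst gg.simps[of d]) simp
  finally show ?thesis .
qed

definition AA :: "nat \<Rightarrow> nat set \<Rightarrow> rat" where
  "AA z M = (\<Sum>d\<in>{d. d dvd z \<and> (\<forall>m\<in>M. \<not> d dvd m)}. gg d)"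

lemma AA_empty: "z > 0 \<Longrightarrow> AA z {} = 1 / of_nat z"
  unfolding AA_def using gg_sum by simp

lemma AA_insert:
  assumes "z > 0" "x dvd z"
  shows "AA z (insert x M) = AA z M - AA x (gcd x ` M)"
proof -
  let ?S = "{d. d dvd z \<and> (\<forall>m\<in>M. \<not> d dvd m)}"
  let ?S1 = "{d\<in>?S. \<not> d dvd x}"
  let ?S2 = "{d\<in>?S. d dvd x}"
  have fin: "finite ?S" using assms by (auto intro: finite_subset[of _ "{..z}"] dest: dvd_imp_le)
  have un: "?S = ?S1 \<union> ?S2" by auto
  have "AA z M = sum gg (?S1 \<union> ?S2)" unfolding AA_def by (rule arg_cong[where f="sum gg", OF un])
  also have "\<dots> = sum gg ?S1 + sum gg ?S2"
    by (rule sum.union_disjoint) (auto intro: rev_finite_subset[OF fin])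
  finally have "AA z M = sum gg ?S1 + sum gg ?S2" .
  moreover have "?S1 = {d. d dvd z \<and> (\<forall>m\<in>insert x M. \<not> d dvd m)}" by auto
  moreover have "?S2 = {d. d dvd x \<and> (\<forall>m\<in>gcd x ` M. \<not> d dvd m)}"
    using assms by (auto intro: dvd_trans)
  ultimately show ?thesis unfolding AA_def by simp
qed

lemma AA_single: "y > 0 \<Longrightarrow> h dvd y \<Longrightarrow> AA y {h} = 1 / of_nat y - 1 / of_nat h"
  using AA_insert[of y h "{}"] AA_empty[of y] AA_empty[of h]
  by (cases "h = 0") auto

lemma AA_cong:
  assumes "\<And>d. d dvd z \<Longrightarrow> (\<exists>m\<in>M. d dvd m) \<longleftrightarrow> (\<exists>m\<in>M'. d dvd m)"
  shows "AA z M = AA z M'"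
  unfolding AA_def using assms by (metis (no_types, lifting))

lemma AA_greatest:
  assumes "e \<in> M" "\<And>m. m \<in> M \<Longrightarrow> m dvd e"
  shows "AA z M = AA z {e}"
  by (rule AA_cong) (use assms in \<open>auto intro: dvd_trans\<close>)


fun goodl :: "nat list \<Rightarrow> bool" where
  "goodl [] = True"
| "goodl (x # xs) = (goodl xs \<and> (\<forall>y\<in>set xs. \<not> x dvd y \<and> \<not> y dvd x) \<and> divisor_chain (gcd x ` set xs))"

lemma chain_max_dvd:
  assumes "finite C" "C \<noteq> {}" "divisor_chain C" "0 \<notin> C" "c \<in> C"
  shows "c dvd Max C"
proof -
  have m: "Max C \<in> C" using assms by simp
  have le: "c \<le> Max C" using assms by simp
  from assms(3) m assms(5) have "c dvd Max C \<or> Max C dvd c" unfolding divisor_chain_def by blast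
  then show ?thesis
  proof
    assume "Max C dvd c"
    then have "Max C \<le> c" using assms by (metis dvd_imp_le neq0_conv)
    with le show ?thesis by simp
  qed
qed

lemma proper_dvd_2: "(a::nat) dvd b \<Longrightarrow> a \<noteq> b \<Longrightarrow> b > 0 \<Longrightarrow> 2 * a \<le> b"
proof -
  assume "a dvd b" "a \<noteq> b" "b > 0"
  then obtain k where k: "b = a * k" by blast
  with \<open>b > 0\<close> have "k \<noteq> 0" by auto
  moreover have "k \<noteq> 1" using k \<open>a \<noteq> b\<close> by auto
  ultimately have "k \<ge> 2" by auto
  then show ?thesis using k by (metis mult.commute mult_le_mono2)
qed

lemma recip_le: "(2::nat) * a \<le> b \<Longrightarrow> a > 0 \<Longrightarrow> 2 / of_nat b \<le> (1 / of_nat a :: rat)"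
proof -
  assume h: "2 * a \<le> b" "a > 0"
  then have "of_nat (2*a) \<le> (of_nat b :: rat)" by (simp only: of_nat_le_iff)
  then have "2 * of_nat a \<le> (of_nat b :: rat)" by simp
  moreover have "(of_nat a :: rat) > 0" using h by simp
  ultimately show ?thesis by (simp add: field_simps)
qed

lemma good_pos:
  assumes "z > 0" "\<forall>x\<in>set ys. x dvd z" "goodl ys" "length ys \<ge> 2"
  shows "AA z (set ys) \<ge> 1 / of_nat z"
  using assms
proof (induction ys)
  case Nil then show ?case by simp
next
  case (Cons x xs)
  have xz: "x dvd z" using Cons.prems by simp
  have xpos: "x > 0" using xz \<open>z > 0\<close> by (metis dvd_0_left_iff neq0_conv)
  have ypos: "\<And>y. y \<in> set xs \<Longrightarrow> y > 0" using Cons.prems by (metis dvd_0_left_iff list.set_intros(2) neq0_conv)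
  have ins: "AA z (set (x # xs)) = AA z (set xs) - AA x (gcd x ` set xs)"
    using AA_insert[OF \<open>z > 0\<close> xz] by simp
  show ?case
  proof (cases "length xs \<ge> 2")
    case True
    have IH: "AA z (set xs) \<ge> 1 / of_nat z" using Cons True by simp
    let ?C = "gcd x ` set xs"
    have ne: "xs \<noteq> []" using True by auto
    have C: "finite ?C" "?C \<noteq> {}" "divisor_chain ?C" "0 \<notin> ?C"
      using ne Cons.prems xpos by auto
    have eC: "Max ?C \<in> ?C" using C by simp
    then obtain y where y: "y \<in> set xs" "Max ?C = gcd x y" by auto
    have "AA x ?C = AA x {Max ?C}" by (rule AA_greatest[OF eC chain_max_dvd[OF C]])
    also have "\<dots> = 1 / of_nat x - 1 / of_nat (Max ?C)" by (rule AA_single[OF xpos]) (simp add: y)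
    finally have a1: "AA x ?C = 1 / of_nat x - 1 / of_nat (gcd x y)" using y by simp
    have "gcd x y \<noteq> x" using Cons.prems y by (metis gcd_nat.absorb_iff1 goodl.simps(2))
    then have "2 * gcd x y \<le> x" using proper_dvd_2 xpos by auto
    then have "2 / of_nat x \<le> 1 / (of_nat (gcd x y) :: rat)" using recip_le xpos by auto
    moreover have "1 / of_nat x \<le> (2 / of_nat x :: rat)" using xpos by (simp add: divide_right_mono)
    ultimately have "AA x ?C \<le> 0" using a1 by linarith
    then show ?thesis using ins IH by simp
  next
    case False
    then obtain y where xs: "xs = [y]" using Cons.prems
      by (cases xs) (auto simp: Suc_le_eq)
    have yz: "y dvd z" using Cons.prems xs by simp
    have yp: "y > 0" using ypos xs by simp
    have g: "gcd x ` set xs = {gcd x y}" using xs by simp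
    have "AA z (set xs) = 1 / of_nat z - 1 / of_nat y"
      using AA_single[OF \<open>z > 0\<close> yz] xs by simp
    moreover have "AA x (gcd x ` set xs) = 1 / of_nat x - 1 / of_nat (gcd x y)"
      using AA_single[OF xpos] g by simp
    moreover have "2 * gcd x y \<le> x" "2 * gcd x y \<le> y"
      using Cons.prems xs xpos yp proper_dvd_2
      by (metis gcd_dvd1 gcd_nat.absorb_iff1 goodl.simps(2) list.set_intros(1), metis gcd_dvd2 gcd_nat.absorb_iff2 goodl.simps(2) list.set_intros(1) proper_dvd_2 yp)
    then have "1 / of_nat x \<le> 1 / (2 * of_nat (gcd x y) :: rat)" "1 / of_nat y \<le> 1 / (2 * of_nat (gcd x y) :: rat)"
      using recip_le xpos yp by (auto simp: field_simps)
    ultimately show ?thesis using ins by (simp add: field_simps)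
  qed
qed


lemma card4: "a \<noteq> b \<Longrightarrow> a \<noteq> c \<Longrightarrow> a \<noteq> d \<Longrightarrow> b \<noteq> c \<Longrightarrow> b \<noteq> d \<Longrightarrow> c \<noteq> d \<Longrightarrow> card {a, b, c, d} = 4"
  by auto

lemma card3: "a \<noteq> b \<Longrightarrow> a \<noteq> c \<Longrightarrow> b \<noteq> c \<Longrightarrow> card {a, b, c} = 3"
  by auto

lemma H3:
  assumes "\<not> a dvd b" "\<not> b dvd a" "\<not> a dvd c" "\<not> c dvd a" "\<not> b dvd c" "\<not> c dvd b"
    and "gcd a b dvd c"
  shows "goodl [b, c, a]"
proof -
  have "gcd b a dvd gcd b c" using assms(7) by (simp add: gcd.commute)
  then have "divisor_chain {gcd b c, gcd b a}" unfolding divisor_chain_def by auto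
  then show ?thesis using assms by (simp add: divisor_chain_def)
qed

lemma good_list:
  assumes "\<And>x y. x \<in> X \<Longrightarrow> y \<in> X \<Longrightarrow> x \<noteq> y \<Longrightarrow> \<not> x dvd y"
    and "divisor_chain N"
    and "\<And>x y. x \<in> X \<Longrightarrow> y \<in> X \<Longrightarrow> x \<noteq> y \<Longrightarrow> gcd x y \<in> N"
  shows "distinct ys \<Longrightarrow> set ys \<subseteq> X \<Longrightarrow> goodl ys"
proof (induction ys)
  case Nil then show ?case by simp
next
  case (Cons x xs)
  have "gcd x ` set xs \<subseteq> N" using Cons.prems assms(3) by auto
  then have "divisor_chain (gcd x ` set xs)" using assms(2) unfolding divisor_chain_def by blast
  moreover have "\<forall>y\<in>set xs. \<not> x dvd y \<and> \<not> y dvd x" using Cons.prems assms(1) by auto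
  ultimately show ?case using Cons by simp
qed

lemma L6:
  assumes zp: "z > 0" and fin: "finite M" and dz: "\<forall>m\<in>M. m dvd z \<and> m \<noteq> z"
    and gc: "\<forall>a\<in>M. \<forall>b\<in>M. gcd a b \<in> M" and c6: "card M \<le> 6"
  shows "AA z M \<noteq> 0"
proof -
  define X where "X = {x\<in>M. \<forall>y\<in>M. x dvd y \<longrightarrow> y = x}"
  have pos: "\<And>m. m \<in> M \<Longrightarrow> m > 0" using dz zp by (metis dvd_0_left_iff neq0_conv)
  have XM: "X \<subseteq> M" unfolding X_def by auto
  have finX: "finite X" using fin XM finite_subset by blast
  have up: "\<exists>x\<in>X. m dvd x" if m: "m \<in> M" for m
  proof -
    let ?U = "{y\<in>M. m dvd y}"
    have fU: "finite ?U" "?U \<noteq> {}" using fin m by auto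
    have mx: "Max ?U \<in> ?U" using fU by (rule Max_in)
    have "Max ?U \<in> X" unfolding X_def
    proof (intro CollectI conjI ballI impI)
      show "Max ?U \<in> M" using mx by simp
      fix y assume y: "y \<in> M" "Max ?U dvd y"
      then have "y \<in> ?U" using mx dvd_trans by blast
      then have "y \<le> Max ?U" using fU by simp
      moreover have "Max ?U \<le> y" using y pos dvd_imp_le by blast
      ultimately show "y = Max ?U" by simp
    qed
    then show ?thesis using mx by blast
  qed
  have AX: "AA z M = AA z X"
    by (rule AA_cong) (use up XM in \<open>blast intro: dvd_trans\<close>)
  have anti: "\<not> x dvd y" if "x \<in> X" "y \<in> X" "x \<noteq> y" for x y
    using that unfolding X_def by auto
  define N where "N = M - X"
  have cardMN: "card M = card X + card N"
    unfolding N_def using fin XM by (metis card_Diff_subset finX card_mono add_diff_inverse_nat not_less le_add_diff_inverse)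
  have gN: "gcd x y \<in> N" if "x \<in> X" "y \<in> M" "\<not> x dvd y" for x y
  proof -
    have "gcd x y \<in> M" using gc that XM by blast
    moreover have "gcd x y \<notin> X"
    proof
      assume "gcd x y \<in> X"
      then have "x = gcd x y" using that(1) XM unfolding X_def by auto
      then show False using that(3) by (metis gcd_dvd2)
    qed
    ultimately show ?thesis unfolding N_def by simp
  qed
  have xlt: "x < z" if "x \<in> M" for x
    using dz that zp by (metis dvd_imp_le le_neq_implies_less)
  consider "card X = 0" | "card X = 1" | "card X = 2" | "card X = 3" | "card X \<ge> 4" by linarith
  then show ?thesis
  proof cases
    case 1
    then have "X = {}" using finX by simp
    then show ?thesis using AX AA_empty[OF zp] zp by simp
  next
    case 2
    then obtain x where x: "X = {x}" by (meson card_1_singletonE)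
    have "x \<in> M" using x XM by auto
    then have "x < z" "x > 0" using xlt pos by auto
    then have "1 / of_nat z < (1 / of_nat x :: rat)"
      by (simp add: frac_less2)
    then show ?thesis using AX x AA_single[OF zp, of x] dz \<open>x \<in> M\<close> by auto
  next
    case 3
    then obtain a b where ab: "X = {a, b}" "a \<noteq> b" by (meson card_2_iff)
    have "goodl [a, b]" using anti ab by (auto simp: divisor_chain_def)
    moreover have "\<forall>x\<in>set [a,b]. x dvd z" using ab XM dz by auto
    ultimately have "AA z (set [a,b]) \<ge> 1 / of_nat z" using good_pos[OF zp, of "[a,b]"] by simp
    moreover have "(1 / of_nat z :: rat) > 0" using zp by simp
    ultimately show ?thesis using AX ab by auto
  next
    case 4
    then obtain a b c where abc: "X = {a, b, c}" "a \<noteq> b" "a \<noteq> c" "b \<noteq> c" by (meson card_3_iff)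
    have inX: "a \<in> X" "b \<in> X" "c \<in> X" using abc by auto
    have inM: "a \<in> M" "b \<in> M" "c \<in> M" using inX XM by auto
    have ant: "\<not> a dvd b" "\<not> b dvd a" "\<not> a dvd c" "\<not> c dvd a" "\<not> b dvd c" "\<not> c dvd b"
      using anti inX abc by auto
    have cN: "card N \<le> 3" using cardMN c6 4 by simp
    have finN: "finite N" using fin unfolding N_def by simp
    have key: "gcd a b dvd c \<or> gcd a c dvd b \<or> gcd b c dvd a"
    proof (rule ccontr)
      assume H: "\<not> ?thesis"
      let ?h = "gcd c (gcd a b)"
      have gabM: "gcd a b \<in> M" using gc inM by blast
      have hN: "?h \<in> N" using gN[OF inX(3) gabM] ant by (metis dvd_trans gcd_dvd1)
      have N4: "{gcd a b, gcd a c, gcd b c, ?h} \<subseteq> N"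
        using gN inX inM ant hN by auto
      have hc: "?h dvd c" "?h dvd a" "?h dvd b"
        by (simp, meson dvd_trans gcd_dvd1 gcd_dvd2, meson dvd_trans gcd_dvd1 gcd_dvd2)
      have d1: "gcd a b \<noteq> gcd a c"
      proof assume e: "gcd a b = gcd a c" have "gcd a c dvd c" by simp
        with e H show False by simp qed
      have d2: "gcd a b \<noteq> gcd b c"
      proof assume e: "gcd a b = gcd b c" have "gcd b c dvd c" by simp
        with e H show False by simp qed
      have d3: "gcd a c \<noteq> gcd b c"
      proof assume e: "gcd a c = gcd b c" have "gcd b c dvd b" by simp
        with e H show False by simp qed
      have d4: "?h \<noteq> gcd a b"
      proof assume e: "?h = gcd a b" with hc H show False by simp qed
      have d5: "?h \<noteq> gcd a c"
      proof assume e: "?h = gcd a c" with hc H show False by simp qed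
      have d6: "?h \<noteq> gcd b c"
      proof assume e: "?h = gcd b c" with hc H show False by simp qed
      have "card {gcd a b, gcd a c, gcd b c, ?h} = 4"
        by (rule card4[OF d1 d2 not_sym[OF d4] d3 not_sym[OF d5] not_sym[OF d6]])
      moreover have "card {gcd a b, gcd a c, gcd b c, ?h} \<le> card N" using N4 finN card_mono by blast
      ultimately show False using cN by simp
    qed
    have dvz: "\<forall>x\<in>{a,b,c}. x dvd z" using inM dz by auto
    have "\<exists>ys. goodl ys \<and> set ys = {a,b,c} \<and> length ys = 3"
    proof -
      { assume "gcd a b dvd c"
        then have "goodl [b,c,a]" using H3 ant by blast
        then have ?thesis by (intro exI[of _ "[b,c,a]"]) auto }
      moreover
      { assume "gcd a c dvd b"
        then have "goodl [c,b,a]" using H3[of a c b] ant by blast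
        then have ?thesis by (intro exI[of _ "[c,b,a]"]) auto }
      moreover
      { assume "gcd b c dvd a"
        then have "goodl [c,a,b]" using H3[of b c a] ant by blast
        then have ?thesis by (intro exI[of _ "[c,a,b]"]) auto }
      ultimately show ?thesis using key by blast
    qed
    then obtain ys where ys: "goodl ys" "set ys = {a,b,c}" "length ys = 3" by blast
    have "AA z (set ys) \<ge> 1 / of_nat z" using good_pos[OF zp, of ys] ys dvz by simp
    moreover have "(1 / of_nat z :: rat) > 0" using zp by simp
    ultimately show ?thesis using AX ys abc by auto
  next
    case 5
    have cN: "card N \<le> 2" using cardMN c6 5 by simp
    have finN: "finite N" using fin unfolding N_def by simp
    have chN: "divisor_chain N" unfolding divisor_chain_def
    proof (intro ballI)
      fix p q assume pq: "p \<in> N" "q \<in> N"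
      show "p dvd q \<or> q dvd p"
      proof (rule ccontr)
        assume H: "\<not> (p dvd q \<or> q dvd p)"
        have pM: "p \<in> M" "q \<in> M" "p \<notin> X" using pq unfolding N_def by auto
        have "gcd p q \<in> M" using gc pM by blast
        moreover have "gcd p q \<notin> X"
        proof
          assume "gcd p q \<in> X"
          then have "p = gcd p q" using pM unfolding X_def by auto
          then show False using H by (metis gcd_dvd2)
        qed
        ultimately have gq: "gcd p q \<in> N" unfolding N_def by simp
        have n1: "gcd p q \<noteq> p"
        proof assume "gcd p q = p" then have "p dvd q" by (metis gcd_dvd2) with H show False by blast qed
        have n2: "gcd p q \<noteq> q"
        proof assume "gcd p q = q" then have "q dvd p" by (metis gcd_dvd1) with H show False by blast qed
        have n3: "p \<noteq> q" proof assume "p = q" with H show False by simp qed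
        have "card {p, q, gcd p q} = 3" by (rule card3[OF n3 not_sym[OF n1] not_sym[OF n2]])
        moreover have "card {p, q, gcd p q} \<le> card N" by (rule card_mono[OF finN]) (simp add: pq gq)
        ultimately show False using cN by simp
      qed
    qed
    define ys where "ys = sorted_list_of_set X"
    have ys: "distinct ys" "set ys = X" "length ys = card X" using finX unfolding ys_def by auto
    have gl: "goodl ys"
    proof (rule good_list[OF _ chN, of X])
      show "\<And>x y. x \<in> X \<Longrightarrow> y \<in> X \<Longrightarrow> x \<noteq> y \<Longrightarrow> \<not> x dvd y" by (rule anti)
      show "\<And>x y. x \<in> X \<Longrightarrow> y \<in> X \<Longrightarrow> x \<noteq> y \<Longrightarrow> gcd x y \<in> N"
      proof -
        fix x y assume "x \<in> X" "y \<in> X" "x \<noteq> y"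
        moreover then have "y \<in> M" "\<not> x dvd y" using XM anti by auto
        ultimately show "gcd x y \<in> N" by (intro gN)
      qed
      show "distinct ys" by (rule ys(1))
      show "set ys \<subseteq> X" using ys(2) by simp
    qed
    have dz': "\<forall>x\<in>set ys. x dvd z" using ys(2) XM dz by blast
    have l2: "length ys \<ge> 2" using ys(3) 5 by simp
    have "AA z (set ys) \<ge> 1 / of_nat z" by (rule good_pos[OF zp dz' gl l2])
    moreover have "(1 / of_nat z :: rat) > 0" using zp by simp
    ultimately show ?thesis using AX ys by auto
  qed
qed


definition PP :: "nat set \<Rightarrow> nat \<Rightarrow> nat set" where
  "PP T z = {w\<in>T. w dvd z \<and> w \<noteq> z}"
definition DD :: "nat set \<Rightarrow> nat \<Rightarrow> nat set" where
  "DD T z = {d. d dvd z \<and> (\<forall>m\<in>PP T z. \<not> d dvd m)}"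

locale gset =
  fixes T :: "nat set"
  assumes finT: "finite T" and posT: "\<And>x. x \<in> T \<Longrightarrow> x > 0"
    and gcT: "\<And>x y. x \<in> T \<Longrightarrow> y \<in> T \<Longrightarrow> gcd x y \<in> T"
begin

lemma DD_dvd_iff:
  assumes "d \<in> DD T z" "z \<in> T" "y \<in> T"
  shows "d dvd y \<longleftrightarrow> z dvd y"
proof
  assume dy: "d dvd y"
  have dz: "d dvd z" using assms(1) unfolding DD_def by auto
  have g: "gcd z y \<in> T" using gcT assms by auto
  have "d dvd gcd z y" using dy dz by simp
  then have "gcd z y \<notin> PP T z" using assms(1) unfolding DD_def by auto
  then have "gcd z y = z" using g unfolding PP_def by auto
  then show "z dvd y" by (metis gcd_dvd2)
next
  assume "z dvd y" then show "d dvd y" using assms(1) unfolding DD_def by (auto intro: dvd_trans)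
qed

lemma DD_disj:
  assumes "z1 \<in> T" "z2 \<in> T" "d \<in> DD T z1" "d \<in> DD T z2"
  shows "z1 = z2"
proof -
  have "d dvd z2" "d dvd z1" using assms unfolding DD_def by auto
  then have "z1 dvd z2" "z2 dvd z1" using DD_dvd_iff assms by blast+
  then show ?thesis by (simp add: dvd_antisym)
qed

lemma DD_cover:
  assumes "x \<in> T" "d dvd x"
  shows "\<exists>z\<in>T. z dvd x \<and> d \<in> DD T z"
proof -
  let ?U = "{z\<in>T. d dvd z \<and> z dvd x}"
  have fU: "finite ?U" "?U \<noteq> {}" using finT assms by auto
  let ?z = "Min ?U"
  have zU: "?z \<in> ?U" using fU by (rule Min_in)
  have "d \<in> DD T ?z" unfolding DD_def
  proof (intro CollectI conjI ballI notI)
    show "d dvd ?z" using zU by simp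
    fix w assume w: "w \<in> PP T ?z" "d dvd w"
    then have "w \<in> ?U" using zU unfolding PP_def by (auto intro: dvd_trans)
    then have "?z \<le> w" using fU by simp
    moreover have "w \<le> ?z" using w zU posT unfolding PP_def by (auto intro: dvd_imp_le)
    ultimately show False using w unfolding PP_def by auto
  qed
  then show ?thesis using zU by blast
qed

lemma DD_sub: "z dvd x \<Longrightarrow> DD T z \<subseteq> {d. d dvd x}"
  unfolding DD_def by (auto intro: dvd_trans)

lemma finDD: "z \<in> T \<Longrightarrow> finite (DD T z)"
proof (rule finite_subset[of _ "{d. d dvd z}"])
  assume "z \<in> T"
  then have "z > 0" using posT by blast
  then show "finite {d. d dvd z}" by simp
qed (auto simp: DD_def)

definition gam :: "(nat \<Rightarrow> rat) \<Rightarrow> nat \<Rightarrow> rat" where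
  "gam c d = (\<Sum>y\<in>{y\<in>T. d dvd y}. c y)"

lemma decomp:
  assumes x: "x \<in> T"
  shows "(\<Sum>y\<in>T. c y / of_nat (gcd x y)) = (\<Sum>z\<in>{z\<in>T. z dvd x}. AA z (PP T z) * gam c z)"
proof -
  have xp: "x > 0" using posT x by simp
  have finD: "finite {d. d dvd x}" using xp by simp
  have s1: "(\<Sum>y\<in>T. c y / of_nat (gcd x y)) = (\<Sum>y\<in>T. \<Sum>d\<in>{d\<in>{d. d dvd x}. d dvd y}. c y * gg d)"
  proof (rule sum.cong[OF refl])
    fix y assume y: "y \<in> T"
    have gp: "gcd x y > 0" using xp by simp
    have e: "{d\<in>{d. d dvd x}. d dvd y} = {d. d dvd gcd x y}" by auto
    have "(\<Sum>d\<in>{d\<in>{d. d dvd x}. d dvd y}. c y * gg d) = c y * (\<Sum>d\<in>{d. d dvd gcd x y}. gg d)"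
      unfolding e by (rule sum_distrib_left[symmetric])
    also have "\<dots> = c y / of_nat (gcd x y)" unfolding gg_sum[OF gp] by simp
    finally show "c y / of_nat (gcd x y) = (\<Sum>d\<in>{d\<in>{d. d dvd x}. d dvd y}. c y * gg d)" by simp
  qed
  have s2: "(\<Sum>y\<in>T. \<Sum>d\<in>{d\<in>{d. d dvd x}. d dvd y}. c y * gg d) = (\<Sum>d\<in>{d. d dvd x}. \<Sum>y\<in>{y\<in>T. d dvd y}. c y * gg d)"
    by (rule sum.swap_restrict[OF finT finD])
  have s3: "(\<Sum>d\<in>{d. d dvd x}. \<Sum>y\<in>{y\<in>T. d dvd y}. c y * gg d) = (\<Sum>d\<in>{d. d dvd x}. gg d * gam c d)"
  proof (rule sum.cong[OF refl])
    fix d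
    have "gg d * gam c d = gam c d * gg d" by (rule mult.commute)
    also have "\<dots> = (\<Sum>y\<in>{y\<in>T. d dvd y}. c y * gg d)" unfolding gam_def by (rule sum_distrib_right)
    finally show "(\<Sum>y\<in>{y\<in>T. d dvd y}. c y * gg d) = gg d * gam c d" by simp
  qed
  have U: "{d. d dvd x} = (\<Union>z\<in>{z\<in>T. z dvd x}. DD T z)"
  proof (intro equalityI subsetI)
    fix d assume "d \<in> {d. d dvd x}"
    then obtain z where "z \<in> T" "z dvd x" "d \<in> DD T z" using DD_cover[OF x] by auto
    then show "d \<in> (\<Union>z\<in>{z\<in>T. z dvd x}. DD T z)" by blast
  next
    fix d assume "d \<in> (\<Union>z\<in>{z\<in>T. z dvd x}. DD T z)"
    then obtain z where "z \<in> T" "z dvd x" "d \<in> DD T z" by blast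
    then show "d \<in> {d. d dvd x}" using DD_sub by blast
  qed
  have fI: "finite {z\<in>T. z dvd x}" using finT by simp
  have fA: "\<forall>z\<in>{z\<in>T. z dvd x}. finite (DD T z)" using finDD by blast
  have dA: "\<forall>i\<in>{z\<in>T. z dvd x}. \<forall>j\<in>{z\<in>T. z dvd x}. i \<noteq> j \<longrightarrow> DD T i \<inter> DD T j = {}"
    using DD_disj by blast
  have s4: "(\<Sum>d\<in>{d. d dvd x}. gg d * gam c d) = (\<Sum>z\<in>{z\<in>T. z dvd x}. \<Sum>d\<in>DD T z. gg d * gam c d)"
    unfolding U by (rule sum.UNION_disjoint[OF fI fA dA])
  have s5: "(\<Sum>z\<in>{z\<in>T. z dvd x}. \<Sum>d\<in>DD T z. gg d * gam c d) = (\<Sum>z\<in>{z\<in>T. z dvd x}. AA z (PP T z) * gam c z)"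
  proof (rule sum.cong[OF refl])
    fix z assume z: "z \<in> {z\<in>T. z dvd x}"
    have "gam c d = gam c z" if d: "d \<in> DD T z" for d
      unfolding gam_def
    proof (rule sum.cong)
      show "{y \<in> T. d dvd y} = {y \<in> T. z dvd y}" using DD_dvd_iff[OF d] z by blast
    qed simp
    then have "(\<Sum>d\<in>DD T z. gg d * gam c d) = (\<Sum>d\<in>DD T z. gg d * gam c z)"
      by (intro sum.cong) auto
    also have "\<dots> = (\<Sum>d\<in>DD T z. gg d) * gam c z" by (rule sum_distrib_right[symmetric])
    also have "(\<Sum>d\<in>DD T z. gg d) = AA z (PP T z)" unfolding AA_def DD_def by (rule refl)
    finally show "(\<Sum>d\<in>DD T z. gg d * gam c d) = AA z (PP T z) * gam c z" .
  qed
  show ?thesis using s1 s2 s3 s4 s5 by simp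
qed

lemma core:
  fixes c :: "nat \<Rightarrow> rat"
  assumes al: "\<And>z. z \<in> T \<Longrightarrow> AA z (PP T z) \<noteq> 0"
    and eq: "\<And>x. x \<in> T \<Longrightarrow> (\<Sum>y\<in>T. c y / of_nat (gcd x y)) = 0"
  shows "\<forall>y\<in>T. c y = 0"
proof -
  have e: "x \<in> T \<Longrightarrow> AA x (PP T x) * gam c x = 0" for x
  proof (induction x rule: less_induct)
    case (less x)
    have fin: "finite {z\<in>T. z dvd x}" using finT by simp
    have "{z\<in>T. z dvd x} = insert x {z\<in>T. z dvd x \<and> z \<noteq> x}" using less.prems by auto
    then have "(\<Sum>z\<in>{z\<in>T. z dvd x}. AA z (PP T z) * gam c z)
        = AA x (PP T x) * gam c x + (\<Sum>z\<in>{z\<in>T. z dvd x \<and> z \<noteq> x}. AA z (PP T z) * gam c z)"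
      using finT by simp
    also have "(\<Sum>z\<in>{z\<in>T. z dvd x \<and> z \<noteq> x}. AA z (PP T z) * gam c z) = 0"
    proof (rule sum.neutral, rule ballI)
      fix z assume z: "z \<in> {z\<in>T. z dvd x \<and> z \<noteq> x}"
      then have "z dvd x" "z \<noteq> x" by auto
      moreover have "x > 0" using posT less.prems by blast
      ultimately have "z < x" using dvd_imp_le[of z x] by linarith
      then show "AA z (PP T z) * gam c z = 0" using less.IH z by blast
    qed
    finally have "(\<Sum>z\<in>{z\<in>T. z dvd x}. AA z (PP T z) * gam c z) = AA x (PP T x) * gam c x" by simp
    moreover have "(\<Sum>z\<in>{z\<in>T. z dvd x}. AA z (PP T z) * gam c z) = 0"
      using eq[OF less.prems] decomp[OF less.prems, of c] by simp
    ultimately show ?case by simp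
  qed
  have g0: "x \<in> T \<Longrightarrow> gam c x = 0" for x using e al by simp
  define K where "K = Max T"
  have "\<forall>x\<in>T. K - x = k \<longrightarrow> c x = 0" for k
  proof (induction k rule: less_induct)
    case (less k)
    show ?case
    proof (intro ballI impI)
      fix x assume x: "x \<in> T" "K - x = k"
      have "{y\<in>T. x dvd y} = insert x {y\<in>T. x dvd y \<and> y \<noteq> x}" using x by auto
      then have "gam c x = c x + (\<Sum>y\<in>{y\<in>T. x dvd y \<and> y \<noteq> x}. c y)"
        unfolding gam_def using finT by simp
      also have "(\<Sum>y\<in>{y\<in>T. x dvd y \<and> y \<noteq> x}. c y) = 0"
      proof (rule sum.neutral, rule ballI)
        fix y assume y: "y \<in> {y\<in>T. x dvd y \<and> y \<noteq> x}"
        then have "x dvd y" "y \<noteq> x" "y \<in> T" by auto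
        moreover then have "y > 0" using posT by blast
        ultimately have "x < y" using dvd_imp_le[of x y] by linarith
        moreover have "y \<le> K" using y finT unfolding K_def by simp
        ultimately have "K - y < k" using x by simp
        then show "c y = 0" using less.IH y by blast
      qed
      finally show "c x = 0" using g0 x by simp
    qed
  qed
  then show ?thesis by blast
qed

end


lemma LG:
  assumes "z > 0" "e \<in> P" "\<And>m. m \<in> P \<Longrightarrow> m dvd e" "e dvd z" "e \<noteq> z"
  shows "AA z P \<noteq> 0"
proof -
  have ep: "e > 0" using assms by (cases "e = 0") auto
  have "e \<le> z" using dvd_imp_le[OF assms(4,1)] .
  then have "e < z" using assms(5) by linarith
  then have "1 / of_nat z < (1 / of_nat e :: rat)" using ep by (simp add: frac_less2)
  moreover have "AA z P = 1 / of_nat z - 1 / of_nat e"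
    using AA_greatest[OF assms(2,3)] AA_single[OF assms(1,4)] by simp
  ultimately show ?thesis by linarith
qed

lemma gcd_eq1: "(x::nat) dvd y \<Longrightarrow> gcd x y = x"
  using gcd_proj1_if_dvd[of x y] by simp

lemma gcd_eq2: "(y::nat) dvd x \<Longrightarrow> gcd x y = y"
  using gcd_proj2_if_dvd[of y x] by simp

lemma structure_lemma:
  assumes finT: "finite T" and posT: "\<And>x. x \<in> T \<Longrightarrow> x > 0"
    and RT: "R \<subseteq> T" and ch: "divisor_chain R" and Rne: "R \<noteq> {}"
    and c7: "card (T - R) = 7" and md: "Max R dvd Min (T - R)" and gS: "gcd_closed (T - R)"
  shows "gset T \<and> (\<forall>z\<in>T. AA z (PP T z) \<noteq> 0)"
proof -
  define S where "S = T - R"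
  have finR: "finite R" using finT RT finite_subset by blast
  have finS: "finite S" using finT unfolding S_def by simp
  have Sne: "S \<noteq> {}"
  proof assume "S = {}" then have "card S = 0" by simp with c7 show False unfolding S_def by simp qed
  have posR: "0 \<notin> R" using posT RT by blast
  define mR where "mR = Max R"
  define mS where "mS = Min S"
  have mRR: "mR \<in> R" unfolding mR_def using finR Rne by simp
  have mSS: "mS \<in> S" unfolding mS_def using finS Sne by simp
  have rdv: "r dvd mR" if "r \<in> R" for r
    unfolding mR_def by (rule chain_max_dvd[OF finR Rne ch posR that])
  have gS': "\<And>a b. a \<in> S \<Longrightarrow> b \<in> S \<Longrightarrow> gcd a b \<in> S" using gS unfolding gcd_closed_def S_def by blast
  have posS: "\<And>s. s \<in> S \<Longrightarrow> s > 0" using posT unfolding S_def by blast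
  have sdv: "mS dvd s" if s: "s \<in> S" for s
  proof -
    have g: "gcd mS s \<in> S" using gS' mSS s by blast
    then have "mS \<le> gcd mS s" unfolding mS_def using finS by simp
    moreover have "gcd mS s \<le> mS" using posS[OF mSS] by (simp add: dvd_imp_le)
    ultimately have "gcd mS s = mS" by simp
    then show ?thesis using gcd_dvd2[of mS s] by simp
  qed
  have mRmS: "mR dvd mS" using md unfolding mR_def mS_def S_def .
  have rs: "r dvd s" if "r \<in> R" "s \<in> S" for r s
    by (rule dvd_trans[OF dvd_trans[OF rdv[OF that(1)] mRmS] sdv[OF that(2)]])
  have TRS: "T = R \<union> S" "R \<inter> S = {}" using RT unfolding S_def by auto
  have gT: "gcd x y \<in> T" if xT: "x \<in> T" and yT: "y \<in> T" for x y
  proof -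
    have xo: "x \<in> R \<or> x \<in> S" and yo: "y \<in> R \<or> y \<in> S" using xT yT TRS(1) by blast+
    show ?thesis
    proof (cases "x \<in> R")
      case xR: True
      show ?thesis
      proof (cases "y \<in> R")
        case yR: True
        have "x dvd y \<or> y dvd x" using ch xR yR unfolding divisor_chain_def by blast
        then show ?thesis
        proof
          assume "x dvd y" then have "gcd x y = x" by (rule gcd_eq1)
          then show ?thesis using xT by simp
        next
          assume "y dvd x" then have "gcd x y = y" by (rule gcd_eq2)
          then show ?thesis using yT by simp
        qed
      next
        case False
        then have yS: "y \<in> S" using yo by blast
        have "gcd x y = x" by (rule gcd_eq1[OF rs[OF xR yS]])
        then show ?thesis using xT by simp
      qed
    next
      case False
      then have xS: "x \<in> S" using xo by blast
      show ?thesis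
      proof (cases "y \<in> R")
        case yR: True
        have "gcd x y = y" by (rule gcd_eq2[OF rs[OF yR xS]])
        then show ?thesis using yT by simp
      next
        case False
        then have yS: "y \<in> S" using yo by blast
        have "gcd x y \<in> S" by (rule gS'[OF xS yS])
        then show ?thesis using TRS(1) by blast
      qed
    qed
  qed
  have gs: "gset T" by (unfold_locales) (use finT posT gT in auto)
  have "AA z (PP T z) \<noteq> 0" if z: "z \<in> T" for z
  proof -
    have zp: "z > 0" using posT z by simp
    consider "z \<in> R" | "z = mS" | "z \<in> S" "z \<noteq> mS" using z TRS by blast
    then show ?thesis
    proof cases
      case 1
      have PR: "PP T z \<subseteq> R"
      proof
        fix w assume w: "w \<in> PP T z"
        show "w \<in> R"
        proof (rule ccontr)
          assume "w \<notin> R"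
          then have wS: "w \<in> S" using w TRS unfolding PP_def by auto
          have "w dvd z" using w unfolding PP_def by simp
          then have "w dvd mR" by (rule dvd_trans[OF _ rdv[OF 1]])
          then have "w dvd mS" by (rule dvd_trans[OF _ mRmS])
          then have "w = mS" using sdv[OF wS] by (simp add: dvd_antisym)
          then have "mS dvd z" using w unfolding PP_def by simp
          moreover have "z dvd mS" by (rule dvd_trans[OF rdv[OF 1] mRmS])
          ultimately have "z = mS" by (simp add: dvd_antisym)
          then show False using 1 mSS TRS by auto
        qed
      qed
      show ?thesis
      proof (cases "PP T z = {}")
        case True then show ?thesis using AA_empty[OF zp] zp by simp
      next
        case False
        have fP: "finite (PP T z)" using finT unfolding PP_def by simp
        have chP: "divisor_chain (PP T z)" using ch PR unfolding divisor_chain_def by blast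
        have 0: "0 \<notin> PP T z" using posR PR by blast
        have e: "Max (PP T z) \<in> PP T z" using fP False by simp
        show ?thesis
          by (rule LG[OF zp e chain_max_dvd[OF fP False chP 0]]) (use e in \<open>auto simp: PP_def\<close>)
      qed
    next
      case 2
      have PR: "PP T z \<subseteq> R"
      proof
        fix w assume w: "w \<in> PP T z"
        show "w \<in> R"
        proof (rule ccontr)
          assume "w \<notin> R"
          then have wS: "w \<in> S" using w TRS unfolding PP_def by auto
          have "w dvd mS" using w 2 unfolding PP_def by simp
          then have "w = mS" using sdv[OF wS] by (rule dvd_antisym)
          then show False using w 2 unfolding PP_def by simp
        qed
      qed
      have mRP: "mR \<in> PP T z" unfolding PP_def using mRR RT mRmS 2 mSS TRS by auto
      show ?thesis by (rule LG[OF zp mRP]) (use PR rdv mRP in \<open>auto simp: PP_def\<close>)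
    next
      case 3
      define Q where "Q = {w\<in>S. w dvd z \<and> w \<noteq> z}"
      have mSQ: "mS \<in> Q" unfolding Q_def using mSS sdv 3 by auto
      have "AA z (PP T z) = AA z Q"
      proof (rule AA_cong)
        fix d assume "d dvd z"
        show "(\<exists>m\<in>PP T z. d dvd m) \<longleftrightarrow> (\<exists>m\<in>Q. d dvd m)"
        proof
          assume "\<exists>m\<in>PP T z. d dvd m"
          then obtain m where m: "m \<in> PP T z" "d dvd m" by blast
          show "\<exists>m\<in>Q. d dvd m"
          proof (cases "m \<in> R")
            case True then have "d dvd mS" using dvd_trans[OF m(2) rs[OF True mSS]] by simp
            then show ?thesis using mSQ by blast
          next
            case False then have "m \<in> Q" using m TRS unfolding PP_def Q_def by auto
            then show ?thesis using m by blast
          qed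
        next
          assume "\<exists>m\<in>Q. d dvd m"
          then show "\<exists>m\<in>PP T z. d dvd m" unfolding Q_def PP_def using TRS by blast
        qed
      qed
      moreover have "AA z Q \<noteq> 0"
      proof (rule L6[OF zp])
        show "finite Q" using finS unfolding Q_def by simp
        show "\<forall>m\<in>Q. m dvd z \<and> m \<noteq> z" unfolding Q_def by simp
        show "\<forall>a\<in>Q. \<forall>b\<in>Q. gcd a b \<in> Q"
        proof (intro ballI)
          fix a b assume ab: "a \<in> Q" "b \<in> Q"
          have "gcd a b \<in> S" using gS' ab unfolding Q_def by auto
          moreover have "gcd a b dvd z"
          proof -
            have "a dvd z" using ab unfolding Q_def by simp
            then show ?thesis by (rule dvd_trans[OF gcd_dvd1[of a b]])
          qed
          moreover have "gcd a b \<noteq> z"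
          proof
            assume "gcd a b = z"
            then have "z dvd a" using gcd_dvd1[of a b] by simp
            then show False using ab unfolding Q_def by (auto simp: dvd_antisym)
          qed
          ultimately show "gcd a b \<in> Q" unfolding Q_def by simp
        qed
        have "Q \<subseteq> S - {z}" unfolding Q_def by auto
        then have "card Q \<le> card (S - {z})" using finS by (intro card_mono) auto
        also have "\<dots> = 6" using c7 3 finS unfolding S_def by simp
        finally show "card Q \<le> 6" .
      qed
      ultimately show ?thesis by simp
    qed
  qed
  then show ?thesis using gs by blast
qed


theorem corollary4p5:
  fixes xs :: "nat list" and n :: nat
  assumes "length xs = n" and "n \<ge> 8"
    and "distinct xs" and "\<forall>x\<in>set xs. x > 0"
    and "r_fold_gcd_closed (n - 7) (set xs)"
  shows "det (lcm_matrix xs) \<noteq> 0"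
proof
  let ?T = "set xs"
  have cT: "card ?T = n" using assms(1,3) distinct_card by blast
  obtain R where R: "R \<subseteq> ?T" "divisor_chain R" "card R = n - 7"
    "Max R dvd Min (?T - R)" "gcd_closed (?T - R)"
    using assms(5) unfolding r_fold_gcd_closed_def by blast
  have Rne: "R \<noteq> {}" using R(3) assms(2) by auto
  have c7: "card (?T - R) = 7" using R(1,3) cT assms(2) by (simp add: card_Diff_subset finite_subset)
  have st: "gset ?T \<and> (\<forall>z\<in>?T. AA z (PP ?T z) \<noteq> 0)"
    by (rule structure_lemma[OF _ _ R(1,2) Rne c7 R(4,5)]) (use assms(4) in auto)
  then interpret gset ?T by simp
  let ?A = "lcm_matrix xs"
  have car: "?A \<in> carrier_mat n n" unfolding lcm_matrix_def using assms(1) by simp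
  assume "det ?A = 0"
  then obtain v where v: "v \<in> carrier_vec n" "v \<noteq> 0\<^sub>v n" "?A *\<^sub>v v = 0\<^sub>v n"
    using det_0_iff_vec_prod_zero[OF car] by blast
  have inj: "inj_on (nth xs) {..<n}" using assms(1,3) by (intro inj_on_nth) auto
  have img: "nth xs ` {..<n} = ?T" using assms(1) by (auto simp: set_conv_nth)
  define ix where "ix = the_inv_into {..<n} (nth xs)"
  have ixn: "ix (xs ! j) = j" if "j < n" for j
    unfolding ix_def using the_inv_into_f_f[OF inj] that by simp
  define c where "c y = of_int (v $ ix y) * (of_nat y :: rat)" for y
  have sumT: "(\<Sum>y\<in>?T. f y) = (\<Sum>j<n. f (xs ! j))" for f :: "nat \<Rightarrow> rat"
    using sum.reindex[OF inj, of f] img by simp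
  have eq: "(\<Sum>y\<in>?T. c y / of_nat (gcd x y)) = 0" if x: "x \<in> ?T" for x
  proof -
    obtain i where i: "i < n" "x = xs ! i" using x img by auto
    have xp: "x > 0" using x assms(4) by simp
    have z: "(?A *\<^sub>v v) $ i = 0" using v(3) i by simp
    have "(?A *\<^sub>v v) $ i = (\<Sum>j\<in>{0..<n}. row ?A i $ j * v $ j)"
      using i car v(1) by (simp add: scalar_prod_def)
    also have "\<dots> = (\<Sum>j\<in>{0..<n}. int (lcm x (xs ! j)) * v $ j)"
      by (rule sum.cong[OF refl]) (use i assms(1) in \<open>auto simp: lcm_matrix_def\<close>)
    finally have "(\<Sum>j\<in>{0..<n}. int (lcm x (xs ! j)) * v $ j) = 0" using z by simp
    then have "(of_int (\<Sum>j\<in>{0..<n}. int (lcm x (xs ! j)) * v $ j) :: rat) = 0" by simp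
    then have 1: "(\<Sum>j<n. of_nat (lcm x (xs ! j)) * of_int (v $ j) :: rat) = 0"
      by (simp add: atLeast0LessThan)
    have "(\<Sum>j<n. of_nat (lcm x (xs ! j)) * of_int (v $ j) :: rat)
        = of_nat x * (\<Sum>j<n. c (xs ! j) / of_nat (gcd x (xs ! j)))"
      unfolding sum_distrib_left
    proof (rule sum.cong[OF refl])
      fix j assume j: "j \<in> {..<n}"
      have gp: "gcd x (xs ! j) > 0" using xp by simp
      have "of_nat (gcd x (xs ! j)) * of_nat (lcm x (xs ! j)) = (of_nat (x * xs ! j) :: rat)"
        by (metis of_nat_mult prod_gcd_lcm_nat)
      then have "of_nat (lcm x (xs ! j)) = (of_nat x * of_nat (xs ! j) / of_nat (gcd x (xs ! j)) :: rat)"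
        using gp by (simp add: field_simps)
      then show "of_nat (lcm x (xs ! j)) * of_int (v $ j) = of_nat x * (c (xs ! j) / of_nat (gcd x (xs ! j)))"
        unfolding c_def using ixn j by simp
    qed
    with 1 xp have "(\<Sum>j<n. c (xs ! j) / of_nat (gcd x (xs ! j))) = 0" by simp
    then show ?thesis using sumT by simp
  qed
  have "\<forall>y\<in>?T. c y = 0" by (rule core) (use st eq in auto)
  then have "v $ j = 0" if "j < n" for j
  proof -
    have "xs ! j \<in> ?T" "xs ! j > 0" using that assms(1,4) by auto
    then have "c (xs ! j) = 0" using \<open>\<forall>y\<in>?T. c y = 0\<close> by blast
    then show ?thesis unfolding c_def using ixn[OF that] \<open>xs ! j > 0\<close> by simp
  qed
  then have "v = 0\<^sub>v n" using v(1) by (intro eq_vecI) auto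
  with v(2) show False by simp
qed

end
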